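(* Let $S\ge 2$ and $H\ge S$. Suppose all sending sub-networks use the same family of likelihoods $L(\theta)$, $\theta=1,\ldots,H$, where $L(\theta)$ is the unit-variance Gaussian density with mean $\mathsf{m}_\theta$ and the means $\mathsf{m}_1,\ldots,\mathsf{m}_H$ are distinct; and suppose the true distribution $f^{(s)}$ of sending sub-network $s$ ($s=1,\ldots,S$) is the unit-variance Gaussian with mean $\nu_s\in\{\mathsf{m}_1,\ldots,\mathsf{m}_H\}$, where $\nu_1,\ldots,\nu_S$ are distinct. Let $D=[d_{\theta s}]\in\mathbb{R}^{H\times S}$ with $d_{\theta s}=D[f^{(s)}\|L(\theta)]=\tfrac12(\mathsf{m}_\theta-\nu_s)^2$. Let $k$ be a receiving agent with aggregate weight vector $x_k=[x_{1k},\ldots,x_{Sk}]^\top$, and assume that $\theta\mapsto\sum_{s=1}^S d_{\theta s}x_{sk}$ has a unique minimizer $\theta^\star_k$ over $\{1,\ldots,H\}$. Define $B_k=(\mathbb{1}_He_{\theta^\star_k}^\top-I_H)D$ and $C_k=\begin{bmatrix}B_k\\ \mathbb{1}_S^\top\end{bmatrix}$. Then $\mathrm{rank}(C_k)=2$.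
   Context: Setting: a weakly-connected network in which the agents are partitioned into sending sub-networks $\mathcal{N}_1,\ldots,\mathcal{N}_S$ and receiving sub-networks; the (left-stochastic, nonnegative) combination matrix $A$ has block form $\begin{bmatrix}A_{\mathcal{S}}&A_{\mathcal{S}\mathcal{R}}\\0&A_{\mathcal{R}}\end{bmatrix}$ with $A_{\mathcal{S}}=\mathrm{blockdiag}\{A_{\mathcal{N}_1},\ldots,A_{\mathcal{N}_S}\}$, each sending sub-network strongly connected with Perron vector $p^{(s)}$, each receiving sub-network connected and linked to at least one agent of each sending sub-network. With $E=\mathrm{blockdiag}\{p^{(s)}\mathbb{1}^\top_{N_s}\}$ and $\Omega=[\omega_{\ell k}]=EA_{\mathcal{S}\mathcal{R}}(I-A_{\mathcal{R}})^{-1}$ (the top-right block of $\lim_i A^i$), the aggregate weight from sending sub-network $s$ to receiving agent $k$ is $x_{sk}=\sum_{\ell\in\mathcal{N}_s}\omega_{\ell k}$; these are strictly positive and $\sum_s x_{sk}=1$. Within each sending sub-network all agents share the same true distribution $f^{(s)}$ and likelihoods. $D[f\|g]$ denotes KL divergence, $e_m$ the $m$-th canonical basis vector of $\mathbb{R}^H$, $\mathbb{1}_L$ the all-ones vector. *)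

theory Defs
  imports "Jordan_Normal_Form.DL_Rank"
begin

text \<open>Indices are 0-based: hypotheses theta range over {0..<H}, sending
  sub-networks s over {0..<S}.\<close>

text \<open>KL-divergence matrix D, d_{theta s} = D[f^(s) || L(theta)] = (m_theta - nu_s)^2 / 2
  for unit-variance Gaussians.\<close>
definition KL_mat :: "nat \<Rightarrow> nat \<Rightarrow> (nat \<Rightarrow> real) \<Rightarrow> (nat \<Rightarrow> real) \<Rightarrow> real mat" where
  "KL_mat H S m \<nu> = mat H S (\<lambda>(\<theta>, s). (m \<theta> - \<nu> s)\<^sup>2 / 2)"

definition B_mat :: "nat \<Rightarrow> nat \<Rightarrow> real mat \<Rightarrow> real mat" where
  "B_mat H \<theta>s D = (mat H H (\<lambda>(i, j). if j = \<theta>s then 1 else 0) - 1\<^sub>m H) * D"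

definition C_mat :: "nat \<Rightarrow> nat \<Rightarrow> nat \<Rightarrow> real mat \<Rightarrow> real mat" where
  "C_mat H S \<theta>s D = B_mat H \<theta>s D @\<^sub>r mat 1 S (\<lambda>_. 1)"

end

theory Submission
  imports Defs
begin
lemma C_explicit:
  assumes "ts < H"
  shows "C_mat H S ts (KL_mat H S m nu) = mat (H+1) S (\<lambda>(r,c). if r < H then
     (m ts - nu c)\<^sup>2 / 2 - (m r - nu c)\<^sup>2 / 2 else 1)"
proof (rule eq_matI)
  fix i j assume i: "i < dim_row (mat (H+1) S (\<lambda>(r,c). if r < H then
     (m ts - nu c)\<^sup>2 / 2 - (m r - nu c)\<^sup>2 / 2 else 1 :: real))" and j: "j < dim_col (mat (H+1) S (\<lambda>(r,c). if r < H then
     (m ts - nu c)\<^sup>2 / 2 - (m r - nu c)\<^sup>2 / 2 else 1 :: real))"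
  show "C_mat H S ts (KL_mat H S m nu) $$ (i, j) = mat (H+1) S (\<lambda>(r,c). if r < H then
     (m ts - nu c)\<^sup>2 / 2 - (m r - nu c)\<^sup>2 / 2 else 1) $$ (i, j)"
  proof (cases "i < H")
    case True
    have "(\<Sum>k = 0..<H. ((if k = ts then 1 else 0) - (if i = k then 1 else 0)) * (m k - nu j)\<^sup>2 / 2)
       = (\<Sum>k = 0..<H. (if k = ts then (m k - nu j)\<^sup>2 / 2 else 0)) - (\<Sum>k = 0..<H. (if k = i then (m k - nu j)\<^sup>2 / 2 else 0))"
      unfolding sum_subtractf[symmetric] by (rule sum.cong, auto)
    also have "\<dots> = (m ts - nu j)\<^sup>2 / 2 - (m i - nu j)\<^sup>2 / 2" using True assms by (simp add: sum.delta')
    finally show ?thesis using True i j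
      by (simp add: C_mat_def B_mat_def KL_mat_def append_rows_def scalar_prod_def)
  next
    case False
    then show ?thesis using i j by (simp add: C_mat_def B_mat_def KL_mat_def append_rows_def)
  qed
qed (auto simp: C_mat_def B_mat_def KL_mat_def append_rows_def)

lemma main_rank:
  fixes H S :: nat and m nu :: "nat \<Rightarrow> real" and ts t0 :: nat
  assumes S2: "S \<ge> 2" and ts: "ts < H" and t0: "t0 < H" "m t0 \<noteq> m ts"
    and nu01: "nu 0 \<noteq> nu 1"
  shows "vec_space.rank (H+1) (mat (H+1) S (\<lambda>(r,c). if r < H then
     (m ts - nu c)\<^sup>2 / 2 - (m r - nu c)\<^sup>2 / 2 else (1::real))) = 2"
proof -
  interpret vec_space "TYPE(real)" "H+1" .
  define M where "M = mat (H+1) S (\<lambda>(r,c). if r < H then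
     (m ts - nu c)\<^sup>2 / 2 - (m r - nu c)\<^sup>2 / 2 else (1::real))"
  define g where "g r = (if r < H then ((m ts)\<^sup>2 - (m r)\<^sup>2) / 2 else (1::real))" for r
  define h where "h r = (if r < H then m r - m ts else (0::real))" for r
  define A1 where "A1 = mat (H+1) S (\<lambda>(r,c). g r)"
  define A2 where "A2 = mat (H+1) S (\<lambda>(r,c). h r * nu c)"
  have MC: "M \<in> carrier_mat (H+1) S" unfolding M_def by simp
  have A1C: "A1 \<in> carrier_mat (H+1) S" and A2C: "A2 \<in> carrier_mat (H+1) S"
    unfolding A1_def A2_def by auto
  have "M = A1 + A2"
    by (rule eq_matI) (auto simp: M_def A1_def A2_def g_def h_def power2_eq_square field_simps)
  have r1: "rank A1 \<le> 1"
    by (rule rank_le_1_product_entries[OF A1C, of g "\<lambda>_. 1"]) (auto simp: A1_def)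
  have r2: "rank A2 \<le> 1"
    by (rule rank_le_1_product_entries[OF A2C, of h nu]) (auto simp: A2_def)
  have le: "rank M \<le> 2"
    using rank_subadditive[OF A1C A2C] r1 r2 \<open>M = A1 + A2\<close> by simp
  define c0 where "c0 = col M 0"
  define c1 where "c1 = col M 1"
  have c0i: "c0 $ i = (if i < H then (m ts - nu 0)\<^sup>2 / 2 - (m i - nu 0)\<^sup>2 / 2 else 1)" if "i < H+1" for i
    using that S2 by (simp add: c0_def M_def)
  have c1i: "c1 $ i = (if i < H then (m ts - nu 1)\<^sup>2 / 2 - (m i - nu 1)\<^sup>2 / 2 else 1)" if "i < H+1" for i
    using that S2 by (simp add: c1_def M_def)
  have key: "(m ts - nu 0)\<^sup>2 / 2 - (m t0 - nu 0)\<^sup>2 / 2 - ((m ts - nu 1)\<^sup>2 / 2 - (m t0 - nu 1)\<^sup>2 / 2)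
      = (m ts - m t0) * (nu 1 - nu 0)"
    by (simp add: power2_eq_square field_simps)
  have nz: "(m ts - m t0) * (nu 1 - nu 0) \<noteq> 0" using t0 nu01 by simp
  have "c0 \<noteq> c1"
  proof
    assume "c0 = c1"
    then have "c0 $ t0 = c1 $ t0" by simp
    then show False using c0i[of t0] c1i[of t0] t0 key nz by simp
  qed
  have Csub: "{c0, c1} \<subseteq> carrier_vec (H+1)"
    using MC S2 by (auto simp: c0_def c1_def M_def)
  have indpt: "lin_indpt {c0, c1}"
  proof
    assume ld: "lin_dep {c0, c1}"
    obtain a v where a: "lincomb a {c0, c1} = 0\<^sub>v (H+1)" "v \<in> {c0,c1}" "a v \<noteq> 0"
      using finite_lin_dep[OF _ ld] Csub by auto
    have e: "a c0 * c0 $ i + a c1 * c1 $ i = 0" if "i < H+1" for i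
    proof -
      have "lincomb a {c0, c1} $ i = 0" using a(1) that by simp
      then show ?thesis using lincomb_index[OF that Csub, of a] \<open>c0 \<noteq> c1\<close> by simp
    qed
    have e1: "a c0 + a c1 = 0" using e[of H] c0i[of H] c1i[of H] by simp
    have e2: "a c0 * ((m ts - nu 0)\<^sup>2 / 2 - (m t0 - nu 0)\<^sup>2 / 2) + a c1 * ((m ts - nu 1)\<^sup>2 / 2 - (m t0 - nu 1)\<^sup>2 / 2) = 0"
      using e[of t0] c0i[of t0] c1i[of t0] t0 by simp
    have "a c0 * ((m ts - m t0) * (nu 1 - nu 0)) = 0"
    proof -
      have "a c1 = - a c0" using e1 by simp
      then have "a c0 * (((m ts - nu 0)\<^sup>2 / 2 - (m t0 - nu 0)\<^sup>2 / 2) - ((m ts - nu 1)\<^sup>2 / 2 - (m t0 - nu 1)\<^sup>2 / 2)) = 0"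
        using e2 by (simp only: right_diff_distrib)
      then show ?thesis by (simp only: key)
    qed
    then have "a c0 = 0" using nz by simp
    then have "a c1 = 0" using e1 by simp
    then show False using a(2,3) \<open>a c0 = 0\<close> by auto
  qed
  have "{c0, c1} \<subseteq> set (cols M)"
    using MC S2 by (auto simp: c0_def c1_def cols_def)
  from rank_ge_card_indpt[OF MC this indpt] have "rank M \<ge> 2" using \<open>c0 \<noteq> c1\<close> by simp
  with le show ?thesis unfolding M_def by simp
qed

theorem theorem2:
  fixes S H :: nat and m \<nu> x :: "nat \<Rightarrow> real" and \<theta>s :: nat
  assumes "S \<ge> 2" and "H \<ge> S"
    and "inj_on m {..<H}"
    and "\<forall>s<S. \<nu> s \<in> m ` {..<H}"
    and "inj_on \<nu> {..<S}"
    and "\<forall>s<S. x s > 0" and "(\<Sum>s<S. x s) = 1"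
    and "\<theta>s < H"
    and "\<forall>\<theta><H. \<theta> \<noteq> \<theta>s \<longrightarrow>
           (\<Sum>s<S. (KL_mat H S m \<nu>) $$ (\<theta>s, s) * x s) < (\<Sum>s<S. (KL_mat H S m \<nu>) $$ (\<theta>, s) * x s)"
  shows "vec_space.rank (H + 1) (C_mat H S \<theta>s (KL_mat H S m \<nu>)) = 2"
  proof -
  define t0 where "t0 = (if \<theta>s = 0 then 1 else (0::nat))"
  have t0H: "t0 < H" using assms(1,2,8) by (auto simp: t0_def)
  have t0ne: "t0 \<noteq> \<theta>s" by (auto simp: t0_def)
  have "m t0 \<noteq> m \<theta>s" using assms(3) t0H assms(8) t0ne by (auto dest: inj_onD)
  moreover have "\<nu> 0 \<noteq> \<nu> 1" using assms(1,5) by (auto dest: inj_onD)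
  ultimately show ?thesis
    unfolding C_explicit[OF assms(8)] using main_rank[OF assms(1) assms(8) t0H] by blast
qed

end
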